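(* Let $K\ge1$, $r\in[0,1]^K$, $g(\theta)=\pi_\theta^\top r$ with $\pi_\theta=\mathrm{softmax}(\theta)$, $\theta\in\mathbb{R}^K$. Let $\theta\in\mathbb{R}^K$ with $\nabla g(\theta)\neq0$, let $\eta\in(0,1/3)$, and let $\theta'=\theta+\eta\,\nabla g(\theta)/\|\nabla g(\theta)\|_2$. Then for every $\zeta\in[0,1]$, with $\theta_\zeta:=\theta+\zeta(\theta'-\theta)$, $$\|\nabla g(\theta_\zeta)\|_2\le\frac{1}{1-3\eta}\,\|\nabla g(\theta)\|_2.$$
   Context: $\mathrm{softmax}(\theta)(a)=e^{\theta(a)}/\sum_{a'}e^{\theta(a')}$. *)

theory Defs
  imports "HOL-Analysis.Analysis"
begin

definition softmax :: "real ^ 'k \<Rightarrow> 'k::finite \<Rightarrow> real" where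
  "softmax \<theta> a = exp (\<theta> $ a) / (\<Sum>a'\<in>UNIV. exp (\<theta> $ a'))"

definition expected_reward :: "real ^ 'k \<Rightarrow> real ^ 'k::finite \<Rightarrow> real" where
  "expected_reward r \<theta> = (\<Sum>a\<in>UNIV. softmax \<theta> a * r $ a)"

definition gradient :: "(real ^ 'k \<Rightarrow> real) \<Rightarrow> real ^ 'k \<Rightarrow> real ^ 'k::finite" where
  "gradient f x = (THE v. (f has_derivative (\<lambda>h. v \<bullet> h)) (at x))"

end

theory Submission imports Defs begin

definition Zs :: "real ^ 'k::finite \<Rightarrow> real" where "Zs x = (\<Sum>a\<in>UNIV. exp (x $ a))"

lemma vnth_deriv[derivative_intros]: "((\<lambda>x. x $ a) has_derivative (\<lambda>h. h $ a)) F"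
  by (rule bounded_linear_imp_has_derivative) (rule bounded_linear_vec_nth)

lemma Zs_pos: "Zs x > 0"
  unfolding Zs_def by (rule sum_pos) auto

lemma softmax_alt: "softmax x a = exp (x $ a) / Zs x"
  by (simp add: softmax_def Zs_def)

lemma softmax_pos: "softmax x a > 0"
  by (simp add: softmax_alt Zs_pos)

lemma softmax_sum: "(\<Sum>a\<in>UNIV. softmax x a) = 1"
  unfolding softmax_alt sum_divide_distrib[symmetric] Zs_def[symmetric] using Zs_pos[of x] by simp

lemma Zs_deriv: "(Zs has_derivative (\<lambda>h. \<Sum>a\<in>UNIV. exp (x$a) * h$a)) (at x)"
  unfolding Zs_def[abs_def]
  by (auto intro!: derivative_eq_intros simp: mult.commute)

lemma softmax_deriv:
  "((\<lambda>y. softmax y a) has_derivative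
     (\<lambda>h. softmax x a * (h$a - (\<Sum>b\<in>UNIV. softmax x b * h$b)))) (at x)"
proof -
  have Z: "Zs x \<noteq> 0" using Zs_pos[of x] by simp
  have "((\<lambda>y. exp (y$a) / Zs y) has_derivative
     (\<lambda>h. - exp (x $ a) * (inverse (Zs x) * (\<Sum>b\<in>UNIV. exp (x$b) * h$b) * inverse (Zs x)) +
          (h$a * exp (x$a)) / Zs x)) (at x)"
    by (rule derivative_eq_intros Zs_deriv refl | simp add: Z)+
  moreover have "(\<lambda>h. - exp (x $ a) * (inverse (Zs x) * (\<Sum>b\<in>UNIV. exp (x$b) * h$b) * inverse (Zs x)) +
          (h$a * exp (x$a)) / Zs x) = (\<lambda>h. softmax x a * (h$a - (\<Sum>b\<in>UNIV. softmax x b * h$b)))"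
    apply (rule ext)
    apply (simp add: softmax_alt field_simps sum_divide_distrib[symmetric] sum_distrib_left sum_negf Z)
    done
  ultimately show ?thesis unfolding softmax_alt[abs_def] by simp
qed

lemma vec_has_derivative:
  fixes F :: "real ^ 'n::finite \<Rightarrow> real ^ 'k::finite"
  assumes "\<And>a. ((\<lambda>y. F y $ a) has_derivative (\<lambda>h. F' h $ a)) (at x)"
  shows "(F has_derivative F') (at x)"
  apply (subst has_derivative_componentwise_within)
  apply (rule ballI)
  subgoal for i
    apply (drule axis_inverse)
    apply (erule exE)
    apply (simp only: inner_axis)
    apply simp
    apply (rule assms)
    done
  done

definition Gv :: "real ^ 'k \<Rightarrow> real ^ 'k::finite \<Rightarrow> real ^ 'k" where
  "Gv r x = (\<chi> a. softmax x a * (r $ a - expected_reward r x))"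

definition mm :: "real ^ 'k::finite \<Rightarrow> real ^ 'k \<Rightarrow> real" where
  "mm x h = (\<Sum>b\<in>UNIV. softmax x b * h$b)"

lemma g_deriv0:
  "(expected_reward r has_derivative (\<lambda>h. \<Sum>a\<in>UNIV. softmax x a * (h$a - mm x h) * r$a)) (at x)"
  unfolding expected_reward_def[abs_def] mm_def
  by (intro has_derivative_sum has_derivative_mult_left softmax_deriv)

lemma Dg_eq: "(\<Sum>a\<in>UNIV. softmax x a * (h$a - mm x h) * r$a) = Gv r x \<bullet> h"
proof -
  have "Gv r x \<bullet> h = (\<Sum>a\<in>UNIV. softmax x a * r$a * h$a) - expected_reward r x * mm x h"
    by (simp add: Gv_def inner_vec_def mm_def algebra_simps sum_subtractf sum_distrib_left)
  moreover have "(\<Sum>a\<in>UNIV. softmax x a * (h$a - mm x h) * r$a) =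
     (\<Sum>a\<in>UNIV. softmax x a * r$a * h$a) - mm x h * expected_reward r x"
    by (simp add: expected_reward_def algebra_simps sum_subtractf sum_distrib_left)
  ultimately show ?thesis by simp
qed

lemma g_deriv: "(expected_reward r has_derivative (\<lambda>h. Gv r x \<bullet> h)) (at x)"
  using g_deriv0[of r x] unfolding Dg_eq .

lemma gradient_eq: "gradient (expected_reward r) x = Gv r x"
  unfolding gradient_def
proof (rule the_equality)
  show "(expected_reward r has_derivative (\<bullet>) (Gv r x)) (at x)"
    using g_deriv[of r x] by (simp add: fun_eq_iff)
next
  fix v assume "(expected_reward r has_derivative (\<bullet>) v) (at x)"
  then have "(\<lambda>h. v \<bullet> h) = (\<lambda>h. Gv r x \<bullet> h)"
    using g_deriv[of r x] has_derivative_unique by blast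
  then have "v \<bullet> (v - Gv r x) = Gv r x \<bullet> (v - Gv r x)" by metis
  then have "(v - Gv r x) \<bullet> (v - Gv r x) = 0" by (simp add: inner_diff_left)
  then show "v = Gv r x" by simp
qed

definition DG :: "real ^ 'k \<Rightarrow> real ^ 'k::finite \<Rightarrow> real ^ 'k \<Rightarrow> real ^ 'k" where
  "DG r x h = (\<chi> a. Gv r x $ a * (h$a - mm x h) - softmax x a * (Gv r x \<bullet> h))"

lemma G_deriv: "(Gv r has_derivative DG r x) (at x)"
proof (rule vec_has_derivative)
  fix a
  have d2: "((\<lambda>y. r$a - expected_reward r y) has_derivative (\<lambda>h. 0 - Gv r x \<bullet> h)) (at x)"
    by (intro has_derivative_diff has_derivative_const g_deriv)
  have "((\<lambda>y. softmax y a * (r $ a - expected_reward r y)) has_derivative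
     (\<lambda>h. softmax x a * (0 - Gv r x \<bullet> h) + softmax x a * (h$a - mm x h) * (r $ a - expected_reward r x))) (at x)"
    unfolding mm_def by (rule has_derivative_mult[OF softmax_deriv d2])
  then show "((\<lambda>y. Gv r y $ a) has_derivative (\<lambda>h. DG r x h $ a)) (at x)"
    by (simp add: Gv_def DG_def algebra_simps)
qed

lemma mm_bound: "\<bar>mm x h\<bar> \<le> norm h"
proof -
  have "\<bar>mm x h\<bar> \<le> (\<Sum>b\<in>UNIV. \<bar>softmax x b * h$b\<bar>)"
    unfolding mm_def by (rule sum_abs)
  also have "\<dots> \<le> (\<Sum>b\<in>UNIV. softmax x b * norm h)"
  proof (rule sum_mono)
    fix b
    have "\<bar>h$b\<bar> \<le> norm h" by (rule component_le_norm_cart)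
    then show "\<bar>softmax x b * h$b\<bar> \<le> softmax x b * norm h"
      using softmax_pos[of x b] by (simp add: abs_mult mult_left_mono)
  qed
  also have "\<dots> = norm h" by (simp add: sum_distrib_right[symmetric] softmax_sum)
  finally show ?thesis .
qed

lemma DG_bound: "norm (DG r x h) \<le> 3 * norm (Gv r x) * norm h"
proof -
  define u where "u = (\<chi> a. Gv r x $ a * (h$a - mm x h))"
  define P where "P = (\<chi> a. softmax x a)"
  have eq: "DG r x h = u - (Gv r x \<bullet> h) *\<^sub>R P"
    by (simp add: DG_def u_def P_def vec_eq_iff)
  have "norm u \<le> norm ((2 * norm h) *\<^sub>R Gv r x)"
  proof (rule norm_le_componentwise_cart)
    fix a
    have "\<bar>h$a - mm x h\<bar> \<le> 2 * norm h"
      using component_le_norm_cart[of h a] mm_bound[of x h] by linarith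
    then show "norm (u $ a) \<le> norm (((2 * norm h) *\<^sub>R Gv r x) $ a)"
      by (simp add: u_def abs_mult mult_left_mono mult.commute)
  qed
  then have u: "norm u \<le> 2 * norm h * norm (Gv r x)" by simp
  have "norm P \<le> (\<Sum>a\<in>UNIV. \<bar>P$a\<bar>)" by (rule norm_le_l1_cart)
  also have "\<dots> = (\<Sum>a\<in>UNIV. softmax x a)"
    by (rule sum.cong) (auto simp: P_def less_imp_le[OF softmax_pos])
  also have "\<dots> = 1" by (rule softmax_sum)
  finally have P: "norm P \<le> 1" .
  have "norm ((Gv r x \<bullet> h) *\<^sub>R P) = \<bar>Gv r x \<bullet> h\<bar> * norm P" by simp
  also have "\<dots> \<le> norm (Gv r x) * norm h * 1"
    by (rule mult_mono) (auto simp: P Cauchy_Schwarz_ineq2)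
  finally have v: "norm ((Gv r x \<bullet> h) *\<^sub>R P) \<le> norm (Gv r x) * norm h" by simp
  have "norm (DG r x h) \<le> norm u + norm ((Gv r x \<bullet> h) *\<^sub>R P)"
    unfolding eq by (rule norm_triangle_ineq4)
  then show ?thesis using u v by (simp add: algebra_simps)
qed

theorem lemma3:
  fixes r \<theta> :: "real ^ 'k::finite" and \<eta> \<zeta> :: real
  assumes "\<forall>a. 0 \<le> r $ a \<and> r $ a \<le> 1"
    and "gradient (expected_reward r) \<theta> \<noteq> 0"
    and "0 < \<eta>" and "\<eta> < 1/3"
    and "0 \<le> \<zeta>" and "\<zeta> \<le> 1"
  shows "let g = expected_reward r;
             \<theta>' = \<theta> + (\<eta> / norm (gradient g \<theta>)) *\<^sub>R gradient g \<theta>;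
             \<theta>\<zeta> = \<theta> + \<zeta> *\<^sub>R (\<theta>' - \<theta>)
         in norm (gradient g \<theta>\<zeta>) \<le> (1 / (1 - 3 * \<eta>)) * norm (gradient g \<theta>)"
proof -
  define G0 where "G0 = Gv r \<theta>"
  have G0: "G0 \<noteq> 0" using assms(2) by (simp add: gradient_eq G0_def)
  define d where "d = (\<eta> / norm G0) *\<^sub>R G0"
  have nd: "norm d = \<eta>" using G0 assms(3) by (simp add: d_def)
  define tz where "tz = \<theta> + \<zeta> *\<^sub>R d"
  define S where "S = closed_segment \<theta> tz"
  have cont: "continuous_on S (\<lambda>x. norm (Gv r x))"
  proof (rule continuous_on_norm, rule continuous_at_imp_continuous_on, rule ballI)
    fix x show "isCont (Gv r) x"
      using G_deriv[of r x] by (rule has_derivative_continuous)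
  qed
  obtain xs where xs: "xs \<in> S" and xmax: "\<And>y. y \<in> S \<Longrightarrow> norm (Gv r y) \<le> norm (Gv r xs)"
    using continuous_attains_sup[OF _ _ cont] unfolding S_def by auto
  define M where "M = norm (Gv r xs)"
  have M0: "0 \<le> M" by (simp add: M_def)
  have "norm (Gv r xs - Gv r \<theta>) \<le> (3 * M) * norm (xs - \<theta>)"
  proof (rule differentiable_bound[where f' = "DG r"])
    show "convex S" by (simp add: S_def)
    show "xs \<in> S" by (rule xs)
    show "\<theta> \<in> S" by (simp add: S_def)
    fix x assume x: "x \<in> S"
    show "(Gv r has_derivative DG r x) (at x within S)"
      by (rule has_derivative_at_withinI, rule G_deriv)
    show "onorm (DG r x) \<le> 3 * M"
    proof (rule onorm_le)
      fix h
      have "norm (DG r x h) \<le> 3 * norm (Gv r x) * norm h" by (rule DG_bound)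
      also have "\<dots> \<le> 3 * M * norm h"
        using xmax[OF x] by (simp add: M_def mult_right_mono)
      finally show "norm (DG r x h) \<le> 3 * M * norm h" .
    qed
  qed
  moreover have "norm (xs - \<theta>) \<le> \<eta>"
  proof -
    have "dist xs \<theta> \<le> dist \<theta> tz" using dist_in_closed_segment[OF xs[unfolded S_def]] by simp
    also have "\<dots> = \<zeta> * \<eta>" using assms(5) by (simp add: dist_norm tz_def nd)
    also have "\<dots> \<le> \<eta>" using assms(3,6) by (simp add: mult_left_le_one_le)
    finally show ?thesis by (simp add: dist_norm)
  qed
  ultimately have "norm (Gv r xs - Gv r \<theta>) \<le> 3 * M * \<eta>"
    by (meson M0 mult_left_mono order_trans mult_nonneg_nonneg zero_le_numeral)
  then have "M \<le> norm G0 + 3 * M * \<eta>"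
    unfolding M_def G0_def using norm_triangle_ineq2[of "Gv r xs" "Gv r \<theta>"] by linarith
  then have "M * (1 - 3 * \<eta>) \<le> norm G0" by (simp add: algebra_simps)
  then have Mb: "M \<le> norm G0 / (1 - 3 * \<eta>)" using assms(4) by (simp add: field_simps)
  have "norm (Gv r tz) \<le> M" unfolding M_def by (rule xmax) (simp add: S_def)
  with Mb have "norm (Gv r tz) \<le> (1 / (1 - 3 * \<eta>)) * norm G0" by simp
  moreover have "\<theta> + \<zeta> *\<^sub>R ((\<theta> + (\<eta> / norm G0) *\<^sub>R G0) - \<theta>) = tz"
    by (simp add: tz_def d_def)
  ultimately show ?thesis
    by (simp only: Let_def gradient_eq G0_def[symmetric])
qed

end
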